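(* Work on $\mathbb{R}^d$ with coordinates $x^\mu$ and smooth fields (non-singular at $x=0$). The map $\omega\mapsto e$ given by $$e^a_\mu(x)=\delta^a_\mu+\int_0^1 \omega^a_{\ b\mu}(tx)\,t\,x^b\,dt,$$ with inverse $e\mapsto\omega$ given by $\omega^a_{\ b}=\tfrac12\left(-e^c\wedge i_b i_a de^c+i_b de^a-i_a de^b\right)$, is a bijection between: (i) the space of spin-connections $\omega^a_{\ b}$ satisfying the Fock–Schwinger gauge condition $x^\mu\omega^a_{\ b\mu}(x)=0$ and the torsionless condition $de^a+\omega^a_{\ b}\wedge e^b=0$, where $e^a_\mu(x)=\delta^a_\mu+\int_0^1 \omega^a_{\ b\mu}(tx)\,t\,x^b\,dt$; (ii) the space of vielbeins $e^a=e^a_\mu dx^\mu$ satisfying $$x^\mu e^a_\mu(x)=x^a,\qquad x^a e^a_\mu(x)=x^\mu,\qquad i_a\mathcal L_{\mathfrak r}e^b=i_b\mathcal L_{\mathfrak r}e^a .$$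
   Context: Latin indices $a,b,c\in\{1,\dots,d\}$ are frame indices, Greek indices coordinate indices; frame indices are raised/lowered with $\delta_{ab}$, repeated indices summed, and $x^a=\delta^a_\mu x^\mu$. Spin-connections $\omega^a_{\ b}=\omega^a_{\ b\mu}dx^\mu$ are $\mathfrak{so}(d)$-valued 1-forms. A vielbein is a coframe $e^a=e^a_\mu dx^\mu$ (invertible matrix $e^a_\mu$); its dual vector fields are $e_a=e_a^{\ \mu}\partial_\mu$ with $e^a_\mu e_a^{\ \nu}=\delta^\nu_\mu$, and $i_a$ is the interior product with $e_a$. $\mathfrak r=x^\mu\partial_\mu$ is the radial vector field and $\mathcal L_{\mathfrak r}$ the Lie derivative along it (on a $p$-form, $(\mathcal L_{\mathfrak r}\sigma)_{\mu_1\dots\mu_p}=(x^\nu\partial_\nu+p)\sigma_{\mu_1\dots\mu_p}$). Conventions: $(d\omega)_{\mu_1\dots\mu_{p+1}}=(p+1)\partial_{[\mu_1}\omega_{\mu_2\dots\mu_{p+1}]}$, $(\omega\wedge\sigma)_{\mu_1\dots\mu_{p+q}}=\frac{(p+q)!}{p!q!}\omega_{[\mu_1\dots\mu_p}\sigma_{\mu_{p+1}\dots\mu_{p+q}]}$, $(i_X\omega)_{\mu_2\dots\mu_p}=X^{\mu_1}\omega_{\mu_1\dots\mu_p}$.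
   Formalization: In space (i), the coframe $e^a_\mu$ obtained from $\omega^a_{\ b}$ by the integral formula must also be a vielbein, that is, smooth with the matrix $e^a_\mu(x)$ invertible at every x. Apart from conventions, each condition added here is assumed in the paper as well or is needed for the statement above to hold. *)

theory Defs
  imports "HOL-Analysis.Analysis"
begin

text \<open>Fields on R^d, d = CARD('n). Frame and coordinate indices both range over 'n.
  A spin-connection is given by components omega a b mu x; a vielbein by e a mu x.\<close>

type_synonym 'n conn = "'n \<Rightarrow> 'n \<Rightarrow> 'n \<Rightarrow> real^'n \<Rightarrow> real"
type_synonym 'n frame = "'n \<Rightarrow> 'n \<Rightarrow> real^'n \<Rightarrow> real"

definition pd :: "'n::finite \<Rightarrow> (real^'n \<Rightarrow> real) \<Rightarrow> real^'n \<Rightarrow> real" where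
  "pd i f x = frechet_derivative f (at x) (axis i 1)"

fun Ck :: "nat \<Rightarrow> (real^'n::finite \<Rightarrow> real) \<Rightarrow> bool" where
  "Ck 0 f = continuous_on UNIV f"
| "Ck (Suc k) f = (f differentiable_on UNIV \<and> (\<forall>i. Ck k (pd i f)))"

definition smooth :: "(real^'n::finite \<Rightarrow> real) \<Rightarrow> bool" where
  "smooth f = (\<forall>k. Ck k f)"

definition vmat :: "'n::finite frame \<Rightarrow> real^'n \<Rightarrow> real^'n^'n" where
  "vmat e x = (\<chi> a mu. e a mu x)"

definition is_vielbein :: "'n::finite frame \<Rightarrow> bool" where
  "is_vielbein e = ((\<forall>a mu. smooth (e a mu)) \<and> (\<forall>x. invertible (vmat e x)))"

text \<open>Dual vector fields e_a^mu, so that sum_a e^a_mu e_a^nu = delta.\<close>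
definition inv_frame :: "'n::finite frame \<Rightarrow> 'n \<Rightarrow> 'n \<Rightarrow> real^'n \<Rightarrow> real" where
  "inv_frame e a mu x = matrix_inv (vmat e x) $ mu $ a"

definition dform :: "'n::finite frame \<Rightarrow> 'n \<Rightarrow> 'n \<Rightarrow> 'n \<Rightarrow> real^'n \<Rightarrow> real" where
  "dform e a mu nu x = pd mu (e a nu) x - pd nu (e a mu) x"

definition spin_connection :: "'n::finite conn \<Rightarrow> bool" where
  "spin_connection \<omega> = ((\<forall>a b mu. smooth (\<omega> a b mu)) \<and>
      (\<forall>a b mu x. \<omega> a b mu x = - \<omega> b a mu x))"

definition FS_gauge :: "'n::finite conn \<Rightarrow> bool" where
  "FS_gauge \<omega> = (\<forall>a b x. (\<Sum>mu\<in>UNIV. x $ mu * \<omega> a b mu x) = 0)"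

definition e_of :: "'n::finite conn \<Rightarrow> 'n frame" where
  "e_of \<omega> a mu x = (if a = mu then 1 else 0) +
      integral {0..1} (\<lambda>t. \<Sum>b\<in>UNIV. \<omega> a b mu (t *\<^sub>R x) * t * x $ b)"

definition torsionless :: "'n::finite conn \<Rightarrow> 'n frame \<Rightarrow> bool" where
  "torsionless \<omega> e = (\<forall>a mu nu x. dform e a mu nu x +
      (\<Sum>b\<in>UNIV. \<omega> a b mu x * e b nu x - \<omega> a b nu x * e b mu x) = 0)"

definition lie_r :: "'n::finite frame \<Rightarrow> 'n \<Rightarrow> 'n \<Rightarrow> real^'n \<Rightarrow> real" where
  "lie_r e b mu x = (\<Sum>nu\<in>UNIV. x $ nu * pd nu (e b mu) x) + e b mu x"

definition iL :: "'n::finite frame \<Rightarrow> 'n \<Rightarrow> 'n \<Rightarrow> real^'n \<Rightarrow> real" where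
  "iL e a b x = (\<Sum>mu\<in>UNIV. inv_frame e a mu x * lie_r e b mu x)"

definition omega_of :: "'n::finite frame \<Rightarrow> 'n conn" where
  "omega_of e a b mu x = 1/2 * (
      - (\<Sum>c\<in>UNIV. e c mu x *
           (\<Sum>nu\<in>UNIV. \<Sum>rho\<in>UNIV. inv_frame e b nu x * inv_frame e a rho x * dform e c rho nu x))
      + (\<Sum>nu\<in>UNIV. inv_frame e b nu x * dform e a nu mu x)
      - (\<Sum>nu\<in>UNIV. inv_frame e a nu x * dform e b nu mu x))"

definition space_i :: "'n::finite conn \<Rightarrow> bool" where
  "space_i \<omega> = (spin_connection \<omega> \<and> FS_gauge \<omega> \<and> is_vielbein (e_of \<omega>) \<and>
      torsionless \<omega> (e_of \<omega>))"

definition space_ii :: "'n::finite frame \<Rightarrow> bool" where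
  "space_ii e = (is_vielbein e \<and>
      (\<forall>a x. (\<Sum>mu\<in>UNIV. x $ mu * e a mu x) = x $ a) \<and>
      (\<forall>mu x. (\<Sum>a\<in>UNIV. x $ a * e a mu x) = x $ mu) \<and>
      (\<forall>a b x. iL e a b x = iL e b a x))"

end

theory Submission
  imports Defs
begin


lemma fdw: "f differentiable_on UNIV \<Longrightarrow> (f has_derivative frechet_derivative f (at x)) (at x)"
  by (simp add: differentiable_on_def frechet_derivative_works)

lemma pd_eq: "(f has_derivative f') (at x) \<Longrightarrow> pd i f x = f' (axis i 1)"
  unfolding pd_def using frechet_derivative_at by metis

lemma pd_add: "f differentiable_on UNIV \<Longrightarrow> g differentiable_on UNIV \<Longrightarrow>
   pd i (\<lambda>x. f x + g x) = (\<lambda>x. pd i f x + pd i g x)"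
proof
  fix x assume f: "f differentiable_on UNIV" and g: "g differentiable_on UNIV"
  show "pd i (\<lambda>x. f x + g x) x = pd i f x + pd i g x"
    using pd_eq[OF has_derivative_add[OF fdw[OF f] fdw[OF g]]] pd_eq[OF fdw[OF f]] pd_eq[OF fdw[OF g]]
    by simp
qed

lemma pd_neg: "f differentiable_on UNIV \<Longrightarrow> pd i (\<lambda>x. - f x) = (\<lambda>x. - pd i f x)"
proof
  fix x assume f: "f differentiable_on UNIV"
  show "pd i (\<lambda>x. - f x) x = - pd i f x"
    using pd_eq[OF has_derivative_minus[OF fdw[OF f]]] pd_eq[OF fdw[OF f]]
    by simp
qed

lemma pd_mult: "f differentiable_on UNIV \<Longrightarrow> g differentiable_on UNIV \<Longrightarrow>
   pd i (\<lambda>x. f x * g x) = (\<lambda>x. f x * pd i g x + pd i f x * g x)"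
proof
  fix x assume f: "f differentiable_on UNIV" and g: "g differentiable_on UNIV"
  show "pd i (\<lambda>x. f x * g x) x = f x * pd i g x + pd i f x * g x"
    using pd_eq[OF has_derivative_mult[OF fdw[OF f] fdw[OF g]]] pd_eq[OF fdw[OF f]] pd_eq[OF fdw[OF g]]
    by simp
qed

lemma pd_inverse: "f differentiable_on UNIV \<Longrightarrow> (\<forall>x. f x \<noteq> 0) \<Longrightarrow>
   pd i (\<lambda>x. inverse (f x)) = (\<lambda>x. - (inverse (f x) * pd i f x * inverse (f x)))"
proof
  fix x assume f: "f differentiable_on UNIV" and nz: "\<forall>x. f x \<noteq> 0"
  show "pd i (\<lambda>x. inverse (f x)) x = - (inverse (f x) * pd i f x * inverse (f x))"
    using pd_eq[OF Deriv.has_derivative_inverse[OF _ fdw[OF f]]] pd_eq[OF fdw[OF f]] nz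
    by simp
qed

lemma pd_const: "pd i (\<lambda>x. c) = (\<lambda>x. 0)"
  using pd_eq[OF has_derivative_const] by blast

lemma Ck_cont: "Ck k f \<Longrightarrow> continuous_on UNIV f"
  by (cases k) (auto intro: differentiable_imp_continuous_on)

lemma Ck_mono: "Ck (Suc k) f \<Longrightarrow> Ck k f"
proof (induction k arbitrary: f)
  case 0 then show ?case by (auto intro: differentiable_imp_continuous_on)
next
  case (Suc k) then show ?case by auto
qed

lemma Ck_const: "Ck k (\<lambda>x. c)"
proof (induction k arbitrary: c)
  case 0 then show ?case by simp
next
  case (Suc k) then show ?case by (simp add: pd_const)
qed

lemma Ck_add: "Ck k f \<Longrightarrow> Ck k g \<Longrightarrow> Ck k (\<lambda>x. f x + g x)"
proof (induction k arbitrary: f g)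
  case 0 then show ?case by (simp add: continuous_on_add)
next
  case (Suc k) then show ?case
    by (auto simp: pd_add differentiable_on_def)
qed

lemma Ck_neg: "Ck k f \<Longrightarrow> Ck k (\<lambda>x. - f x)"
proof (induction k arbitrary: f)
  case 0 then show ?case by (simp add: continuous_on_minus)
next
  case (Suc k) then show ?case
    by (auto simp: pd_neg differentiable_on_def)
qed

lemma Ck_minus: "Ck k f \<Longrightarrow> Ck k g \<Longrightarrow> Ck k (\<lambda>x. f x - g x)"
  using Ck_add[of k f "\<lambda>x. - g x"] Ck_neg[of k g] by simp

lemma Ck_mult: "Ck k f \<Longrightarrow> Ck k g \<Longrightarrow> Ck k (\<lambda>x. f x * g x)"
proof (induction k arbitrary: f g)
  case 0 then show ?case by (simp add: continuous_on_mult)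
next
  case (Suc k)
  have df: "f differentiable_on UNIV" and dg: "g differentiable_on UNIV" using Suc.prems by auto
  have "Ck k (pd i (\<lambda>x. f x * g x))" for i
  proof -
    have mf: "Ck k f" by (rule Ck_mono) (use Suc.prems in blast)
    have mg: "Ck k g" by (rule Ck_mono) (use Suc.prems in blast)
    have pf: "Ck k (pd i f)" and pg: "Ck k (pd i g)" using Suc.prems by auto
    show ?thesis unfolding pd_mult[OF df dg]
      by (rule Ck_add[OF Suc.IH[OF mf pg] Suc.IH[OF pf mg]])
  qed
  moreover have "(\<lambda>x. f x * g x) differentiable_on UNIV"
    using df dg by (simp add: differentiable_on_def)
  ultimately show ?case by simp
qed

lemma Ck_inverse: "Ck k f \<Longrightarrow> (\<forall>x. f x \<noteq> 0) \<Longrightarrow> Ck k (\<lambda>x. inverse (f x))"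
proof (induction k arbitrary: f)
  case 0 then show ?case by (auto intro: continuous_on_inverse)
next
  case (Suc k)
  have df: "f differentiable_on UNIV" using Suc.prems by auto
  have "Ck k (pd i (\<lambda>x. inverse (f x)))" for i
  proof -
    have mf: "Ck k f" by (rule Ck_mono) (use Suc.prems in blast)
    have pf: "Ck k (pd i f)" using Suc.prems by auto
    have inv: "Ck k (\<lambda>x. inverse (f x))" using Suc.IH[OF mf Suc.prems(2)] .
    show ?thesis unfolding pd_inverse[OF df Suc.prems(2)]
      by (rule Ck_neg, rule Ck_mult[OF Ck_mult[OF inv pf] inv])
  qed
  moreover have "(\<lambda>x. inverse (f x)) differentiable_on UNIV"
    using df Suc.prems(2) by (simp add: differentiable_on_def)
  ultimately show ?case by simp
qed

lemma Ck_sum: "finite S \<Longrightarrow> (\<And>s. s \<in> S \<Longrightarrow> Ck k (f s)) \<Longrightarrow> Ck k (\<lambda>x. \<Sum>s\<in>S. f s x)"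
proof (induction S rule: finite_induct)
  case empty then show ?case by (simp add: Ck_const)
next
  case (insert s S) then show ?case by (simp add: Ck_add)
qed

lemma Ck_prod: "finite S \<Longrightarrow> (\<And>s. s \<in> S \<Longrightarrow> Ck k (f s)) \<Longrightarrow> Ck k (\<lambda>x. \<Prod>s\<in>S. f s x)"
proof (induction S rule: finite_induct)
  case empty then show ?case by (simp add: Ck_const)
next
  case (insert s S) then show ?case by (simp add: Ck_mult)
qed



definition OmF :: "('n::finite \<Rightarrow> 'n \<Rightarrow> real) \<Rightarrow> ('n \<Rightarrow> 'n \<Rightarrow> real) \<Rightarrow> ('n \<Rightarrow> 'n \<Rightarrow> 'n \<Rightarrow> real) \<Rightarrow> 'n \<Rightarrow> 'n \<Rightarrow> 'n \<Rightarrow> real" where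
 "OmF E F D a b mu = 1/2 * (
      - (\<Sum>c\<in>UNIV. E c mu *
           (\<Sum>nu\<in>UNIV. \<Sum>rho\<in>UNIV. F b nu * F a rho * D c rho nu))
      + (\<Sum>nu\<in>UNIV. F b nu * D a nu mu)
      - (\<Sum>nu\<in>UNIV. F a nu * D b nu mu))"

definition CF :: "('n::finite \<Rightarrow> 'n \<Rightarrow> real) \<Rightarrow> ('n \<Rightarrow> 'n \<Rightarrow> 'n \<Rightarrow> real) \<Rightarrow> 'n \<Rightarrow> 'n \<Rightarrow> 'n \<Rightarrow> real" where
 "CF F D c a b = (\<Sum>rho\<in>UNIV. \<Sum>nu\<in>UNIV. F a rho * F b nu * D c rho nu)"

definition WF where "WF F D a b k = 1/2 * (- CF F D k a b + CF F D a b k - CF F D b a k)"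

lemma K2:
  fixes E F :: "'n::finite \<Rightarrow> 'n \<Rightarrow> real"
  assumes FE: "\<And>mu nu. (\<Sum>a\<in>UNIV. F a mu * E a nu) = (if mu = nu then 1 else 0)"
  shows "(\<Sum>k\<in>UNIV. (\<Sum>nu\<in>UNIV. G nu * F k nu) * E k mu) = G mu"
proof -
  have "(\<Sum>k\<in>UNIV. (\<Sum>nu\<in>UNIV. G nu * F k nu) * E k mu) = (\<Sum>k\<in>UNIV. \<Sum>nu\<in>UNIV. G nu * (F k nu * E k mu))"
    by (simp add: sum_distrib_right mult.assoc)
  also have "\<dots> = (\<Sum>nu\<in>UNIV. G nu * (\<Sum>k\<in>UNIV. F k nu * E k mu))"
    by (subst sum.swap) (simp add: sum_distrib_left)
  also have "\<dots> = G mu" by (simp add: FE if_distrib sum.delta cong: if_cong)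
  finally show ?thesis .
qed

lemma K1:
  fixes E F :: "'n::finite \<Rightarrow> 'n \<Rightarrow> real"
  assumes FE: "\<And>mu nu. (\<Sum>a\<in>UNIV. F a mu * E a nu) = (if mu = nu then 1 else 0)"
  shows "(\<Sum>k\<in>UNIV. \<Sum>b\<in>UNIV. CF F D c k b * E k mu * E b nu) = D c mu nu"
proof -
  have "(\<Sum>k\<in>UNIV. \<Sum>b\<in>UNIV. CF F D c k b * E k mu * E b nu)
     = (\<Sum>b\<in>UNIV. (\<Sum>k\<in>UNIV. (\<Sum>rho\<in>UNIV. (\<Sum>n\<in>UNIV. F b n * D c rho n) * F k rho) * E k mu) * E b nu)"
    unfolding CF_def
    by (subst sum.swap) (auto simp: sum_distrib_right sum_distrib_left mult.assoc mult.left_commute intro!: sum.cong)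
  also have "\<dots> = (\<Sum>b\<in>UNIV. (\<Sum>n\<in>UNIV. F b n * D c mu n) * E b nu)"
    by (subst K2[OF FE]) simp
  also have "\<dots> = (\<Sum>b\<in>UNIV. (\<Sum>n\<in>UNIV. D c mu n * F b n) * E b nu)"
    by (simp add: mult.commute)
  also have "\<dots> = D c mu nu" by (rule K2[OF FE])
  finally show ?thesis .
qed

lemma CF_anti:
  assumes Dan: "\<And>c r n. D c r n = - D c n r"
  shows "CF F D c a b = - CF F D c b a"
proof -
  have "CF F D c b a = (\<Sum>rho\<in>UNIV. \<Sum>nu\<in>UNIV. F a rho * F b nu * D c nu rho)"
    unfolding CF_def by (subst sum.swap) (simp add: mult_ac)
  also have "\<dots> = (\<Sum>rho\<in>UNIV. \<Sum>nu\<in>UNIV. - (F a rho * F b nu * D c rho nu))"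
    by (rule sum.cong[OF refl], rule sum.cong[OF refl], subst Dan, simp)
  also have "\<dots> = - CF F D c a b" by (simp add: CF_def sum_negf)
  finally show ?thesis by simp
qed

lemma Om_eq:
  fixes E F :: "'n::finite \<Rightarrow> 'n \<Rightarrow> real"
  assumes FE: "\<And>mu nu. (\<Sum>a\<in>UNIV. F a mu * E a nu) = (if mu = nu then 1 else 0)"
  shows "OmF E F D a b mu = (\<Sum>k\<in>UNIV. WF F D a b k * E k mu)"
proof -
  have 1: "(\<Sum>c\<in>UNIV. E c mu * (\<Sum>nu\<in>UNIV. \<Sum>rho\<in>UNIV. F b nu * F a rho * D c rho nu))
     = (\<Sum>k\<in>UNIV. CF F D k a b * E k mu)"
    unfolding CF_def
    apply (rule sum.cong[OF refl]) apply (subst sum.swap) by (simp add: sum_distrib_right sum_distrib_left mult_ac)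
  have 2: "(\<Sum>k\<in>UNIV. CF F D a b k * E k mu) = (\<Sum>nu\<in>UNIV. F b nu * D a nu mu)" for a b
  proof -
    have "(\<Sum>k\<in>UNIV. CF F D a b k * E k mu) = (\<Sum>k\<in>UNIV. (\<Sum>n\<in>UNIV. (\<Sum>rho\<in>UNIV. F b rho * D a rho n) * F k n) * E k mu)"
      unfolding CF_def
      apply (rule sum.cong[OF refl]) apply (subst sum.swap) by (simp add: sum_distrib_right sum_distrib_left mult_ac)
    also have "\<dots> = (\<Sum>rho\<in>UNIV. F b rho * D a rho mu)" by (rule K2[OF FE])
    finally show ?thesis .
  qed
  show ?thesis
    unfolding OmF_def WF_def 1 2[symmetric]
    by (simp add: sum_distrib_left sum_distrib_right ring_distribs sum.distrib sum_subtractf sum_negf)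
qed

lemma WF_torsion:
  assumes Dan: "\<And>c r n. D c r n = - D c n r"
  shows "CF F D a k b + WF F D a b k - WF F D a k b = 0"
  using CF_anti[of D F a k b, OF Dan] unfolding WF_def by (simp add: algebra_simps)

lemma Om_torsion:
  fixes E F :: "'n::finite \<Rightarrow> 'n \<Rightarrow> real"
  assumes FE: "\<And>mu nu. (\<Sum>a\<in>UNIV. F a mu * E a nu) = (if mu = nu then 1 else 0)"
  and Dan: "\<And>c r n. D c r n = - D c n r"
  shows "D a mu nu + (\<Sum>b\<in>UNIV. OmF E F D a b mu * E b nu - OmF E F D a b nu * E b mu) = 0"
proof -
  have "D a mu nu + (\<Sum>b\<in>UNIV. OmF E F D a b mu * E b nu - OmF E F D a b nu * E b mu)
    = (\<Sum>k\<in>UNIV. \<Sum>b\<in>UNIV. CF F D a k b * E k mu * E b nu)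
      + (\<Sum>b\<in>UNIV. \<Sum>k\<in>UNIV. WF F D a b k * E k mu * E b nu)
      - (\<Sum>b\<in>UNIV. \<Sum>k\<in>UNIV. WF F D a b k * E k nu * E b mu)"
    unfolding K1[OF FE] Om_eq[OF FE]
    by (simp add: sum_subtractf sum_distrib_right)
  also have "\<dots> = (\<Sum>k\<in>UNIV. \<Sum>b\<in>UNIV. (CF F D a k b + WF F D a b k - WF F D a k b) * E k mu * E b nu)"
  proof -
    have s2: "(\<Sum>b\<in>UNIV. \<Sum>k\<in>UNIV. WF F D a b k * E k mu * E b nu) = (\<Sum>k\<in>UNIV. \<Sum>b\<in>UNIV. WF F D a b k * E k mu * E b nu)"
      by (rule sum.swap)
    have s3: "(\<Sum>b\<in>UNIV. \<Sum>k\<in>UNIV. WF F D a b k * E k nu * E b mu) = (\<Sum>k\<in>UNIV. \<Sum>b\<in>UNIV. WF F D a k b * E k mu * E b nu)"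
      by (simp add: mult_ac)
    show ?thesis unfolding s2 s3 by (simp add: sum.distrib sum_subtractf ring_distribs)
  qed
  also have "\<dots> = 0" by (simp add: WF_torsion[OF Dan])
  finally show ?thesis .
qed

lemma Om_unique:
  fixes E F :: "'n::finite \<Rightarrow> 'n \<Rightarrow> real"
  assumes FE: "\<And>mu nu. (\<Sum>a\<in>UNIV. F a mu * E a nu) = (if mu = nu then 1 else 0)"
  and EF: "\<And>a b. (\<Sum>mu\<in>UNIV. E a mu * F b mu) = (if a = b then 1 else 0)"
  and anti: "\<And>a b mu. w a b mu = - w b a mu"
  and tor: "\<And>a mu nu. D a mu nu + (\<Sum>b\<in>UNIV. w a b mu * E b nu - w a b nu * E b mu) = 0"
  shows "w a b mu = OmF E F D a b mu"
proof -
  define W where "W a b k = (\<Sum>mu\<in>UNIV. w a b mu * F k mu)" for a b k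
  have wW: "w a b mu = (\<Sum>k\<in>UNIV. W a b k * E k mu)" for a b mu
    unfolding W_def by (rule K2[OF FE, symmetric])
  have H: "(\<Sum>m\<in>UNIV. \<Sum>n\<in>UNIV. F c m * F d n * (\<Sum>b\<in>UNIV. w a b m * E b n)) = W a d c" for a c d
  proof -
    have "(\<Sum>m\<in>UNIV. \<Sum>n\<in>UNIV. F c m * F d n * (\<Sum>b\<in>UNIV. w a b m * E b n))
       = (\<Sum>m\<in>UNIV. F c m * (\<Sum>b\<in>UNIV. w a b m * (\<Sum>n\<in>UNIV. E b n * F d n)))"
      apply (rule sum.cong[OF refl])
      apply (simp add: sum_distrib_left)
      apply (subst sum.swap)
      by (simp add: mult_ac)
    also have "\<dots> = (\<Sum>m\<in>UNIV. F c m * w a d m)"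
      by (simp add: EF if_distrib sum.delta cong: if_cong)
    finally show ?thesis unfolding W_def by (simp add: mult_ac)
  qed
  have H2: "(\<Sum>m\<in>UNIV. \<Sum>n\<in>UNIV. F c m * F d n * (\<Sum>b\<in>UNIV. w a b n * E b m)) = W a c d" for a c d
  proof -
    have "(\<Sum>m\<in>UNIV. \<Sum>n\<in>UNIV. F c m * F d n * (\<Sum>b\<in>UNIV. w a b n * E b m))
      = (\<Sum>n\<in>UNIV. \<Sum>m\<in>UNIV. F d n * F c m * (\<Sum>b\<in>UNIV. w a b n * E b m))"
      by (subst sum.swap) (simp add: mult_ac)
    also have "\<dots> = W a c d" by (rule H)
    finally show ?thesis .
  qed
  have T: "CF F D a c d + W a d c - W a c d = 0" for a c d
  proof -
    have "0 = (\<Sum>m\<in>UNIV. \<Sum>n\<in>UNIV. F c m * F d n * (D a m n + (\<Sum>b\<in>UNIV. w a b m * E b n - w a b n * E b m)))"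
      by (simp add: tor)
    also have "\<dots> = CF F D a c d + (\<Sum>m\<in>UNIV. \<Sum>n\<in>UNIV. F c m * F d n * (\<Sum>b\<in>UNIV. w a b m * E b n))
       - (\<Sum>m\<in>UNIV. \<Sum>n\<in>UNIV. F c m * F d n * (\<Sum>b\<in>UNIV. w a b n * E b m))"
      unfolding CF_def by (simp add: ring_distribs sum.distrib sum_subtractf)
    finally show ?thesis unfolding H H2 by simp
  qed
  have Wanti: "W a b k = - W b a k" for a b k
    unfolding W_def by (subst anti) (simp add: sum_negf)
  have WW: "W a b k = WF F D a b k" for k
    using T[of k a b] T[of a b k] T[of b a k] Wanti[of k a b] Wanti[of k b a] Wanti[of b a k]
  proof -
    have "2 * W a b k = - CF F D k a b + CF F D a b k - CF F D b a k"
      using T[of k a b] T[of a b k] T[of b a k] Wanti[of k a b] Wanti[of k b a] Wanti[of b a k]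
      by linarith
    then show ?thesis unfolding WF_def by (simp add: field_simps)
  qed
  show ?thesis unfolding wW Om_eq[OF FE] WW ..
qed

lemma radial_identity:
  fixes E F :: "'n::finite \<Rightarrow> 'n \<Rightarrow> real" and x :: "'n \<Rightarrow> real"
  assumes EF: "\<And>a b. (\<Sum>mu\<in>UNIV. E a mu * F b mu) = (if a = b then 1 else 0)"
  and P1: "\<And>c. (\<Sum>mu\<in>UNIV. x mu * E c mu) = x c"
  and R1: "\<And>a nu. (\<Sum>mu\<in>UNIV. x mu * P a mu nu) = (if a = nu then 1 else 0) - E a nu"
  and R2: "\<And>rho nu. (\<Sum>c\<in>UNIV. x c * P c nu rho) = (if rho = nu then 1 else 0) - E rho nu"
  shows "2 * (\<Sum>mu\<in>UNIV. x mu * OmF E F (\<lambda>c r n. P c n r - P c r n) a b mu)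
     = (\<Sum>mu\<in>UNIV. F a mu * ((\<Sum>nu\<in>UNIV. x nu * P b mu nu) + E b mu))
     - (\<Sum>mu\<in>UNIV. F b mu * ((\<Sum>nu\<in>UNIV. x nu * P a mu nu) + E a mu))"
proof -
  define D where "D = (\<lambda>c r n. P c n r - P c r n)"
  define X where "X a b = (\<Sum>n\<in>UNIV. F a n * (\<Sum>m\<in>UNIV. x m * P b n m))" for a b
  have xD: "(\<Sum>c\<in>UNIV. x c * D c r n) = E n r - E r n" for r n
    unfolding D_def by (simp add: ring_distribs sum_subtractf R2)
  have T1: "(\<Sum>m\<in>UNIV. x m * (\<Sum>c\<in>UNIV. E c m * (\<Sum>nu\<in>UNIV. \<Sum>rho\<in>UNIV. F b nu * F a rho * D c rho nu)))
      = F b a - F a b"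
  proof -
    have "(\<Sum>m\<in>UNIV. x m * (\<Sum>c\<in>UNIV. E c m * (\<Sum>nu\<in>UNIV. \<Sum>rho\<in>UNIV. F b nu * F a rho * D c rho nu)))
      = (\<Sum>c\<in>UNIV. (\<Sum>m\<in>UNIV. x m * E c m) * (\<Sum>nu\<in>UNIV. \<Sum>rho\<in>UNIV. F b nu * F a rho * D c rho nu))"
    proof -
      define Y where "Y c = (\<Sum>nu\<in>UNIV. \<Sum>rho\<in>UNIV. F b nu * F a rho * D c rho nu)" for c
      have "(\<Sum>m\<in>UNIV. x m * (\<Sum>c\<in>UNIV. E c m * Y c)) = (\<Sum>m\<in>UNIV. \<Sum>c\<in>UNIV. x m * E c m * Y c)"
        by (simp add: sum_distrib_left mult.assoc)
      also have "\<dots> = (\<Sum>c\<in>UNIV. \<Sum>m\<in>UNIV. x m * E c m * Y c)" by (rule sum.swap)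
      also have "\<dots> = (\<Sum>c\<in>UNIV. (\<Sum>m\<in>UNIV. x m * E c m) * Y c)" by (simp add: sum_distrib_right)
      finally show ?thesis unfolding Y_def .
    qed
    also have "\<dots> = (\<Sum>nu\<in>UNIV. \<Sum>rho\<in>UNIV. F b nu * F a rho * (\<Sum>c\<in>UNIV. x c * D c rho nu))"
    proof -
      have "(\<Sum>c\<in>UNIV. x c * (\<Sum>nu\<in>UNIV. \<Sum>rho\<in>UNIV. F b nu * F a rho * D c rho nu))
        = (\<Sum>c\<in>UNIV. \<Sum>nu\<in>UNIV. \<Sum>rho\<in>UNIV. x c * (F b nu * F a rho * D c rho nu))"
        by (simp add: sum_distrib_left)
      also have "\<dots> = (\<Sum>nu\<in>UNIV. \<Sum>c\<in>UNIV. \<Sum>rho\<in>UNIV. x c * (F b nu * F a rho * D c rho nu))"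
        by (rule sum.swap)
      also have "\<dots> = (\<Sum>nu\<in>UNIV. \<Sum>rho\<in>UNIV. \<Sum>c\<in>UNIV. x c * (F b nu * F a rho * D c rho nu))"
        by (rule sum.cong[OF refl], rule sum.swap)
      also have "\<dots> = (\<Sum>nu\<in>UNIV. \<Sum>rho\<in>UNIV. F b nu * F a rho * (\<Sum>c\<in>UNIV. x c * D c rho nu))"
        by (simp add: sum_distrib_left mult_ac)
      finally show ?thesis unfolding P1 .
    qed
    also have "\<dots> = (\<Sum>nu\<in>UNIV. F b nu * (\<Sum>rho\<in>UNIV. E nu rho * F a rho))
        - (\<Sum>rho\<in>UNIV. F a rho * (\<Sum>nu\<in>UNIV. E rho nu * F b nu))"
    proof -
      have A: "(\<Sum>nu\<in>UNIV. \<Sum>rho\<in>UNIV. F b nu * F a rho * E nu rho) = (\<Sum>nu\<in>UNIV. F b nu * (\<Sum>rho\<in>UNIV. E nu rho * F a rho))"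
        by (simp add: sum_distrib_left mult_ac)
      have B: "(\<Sum>nu\<in>UNIV. \<Sum>rho\<in>UNIV. F b nu * F a rho * E rho nu) = (\<Sum>rho\<in>UNIV. F a rho * (\<Sum>nu\<in>UNIV. E rho nu * F b nu))"
        by (subst sum.swap) (simp add: sum_distrib_left mult_ac)
      show ?thesis unfolding xD right_diff_distrib sum_subtractf A B by (rule refl)
    qed
    also have "\<dots> = F b a - F a b"
      by (simp add: EF if_distrib sum.delta cong: if_cong)
    finally show ?thesis .
  qed
  have T2: "(\<Sum>m\<in>UNIV. x m * (\<Sum>nu\<in>UNIV. F b nu * D a nu m))
      = F b a - (if a = b then 1 else 0) - X b a" for a b
  proof -
    have "(\<Sum>m\<in>UNIV. x m * (\<Sum>nu\<in>UNIV. F b nu * D a nu m))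
       = (\<Sum>nu\<in>UNIV. F b nu * (\<Sum>m\<in>UNIV. x m * P a m nu)) - X b a"
    proof -
      have "(\<Sum>m\<in>UNIV. x m * (\<Sum>nu\<in>UNIV. F b nu * D a nu m)) = (\<Sum>m\<in>UNIV. \<Sum>nu\<in>UNIV. x m * (F b nu * D a nu m))"
        by (simp add: sum_distrib_left)
      also have "\<dots> = (\<Sum>nu\<in>UNIV. \<Sum>m\<in>UNIV. x m * (F b nu * D a nu m))" by (rule sum.swap)
      also have "\<dots> = (\<Sum>nu\<in>UNIV. F b nu * (\<Sum>m\<in>UNIV. x m * P a m nu)) - X b a"
        unfolding D_def X_def by (simp add: sum_distrib_left right_diff_distrib sum_subtractf mult_ac)
      finally show ?thesis .
    qed
    also have "\<dots> = F b a - (if a = b then 1 else 0) - X b a"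
    proof -
      have e0: "F b nu * (if a = nu then 1 else 0) = (if a = nu then F b nu else 0)" for nu by simp
      have e1: "(\<Sum>nu\<in>UNIV. F b nu * (if a = nu then 1 else 0)) = F b a"
        unfolding e0 by simp
      have e2: "(\<Sum>nu\<in>UNIV. F b nu * E a nu) = (if a = b then 1 else 0)"
        using EF[of a b] by (simp add: mult.commute)
      show ?thesis unfolding R1 right_diff_distrib sum_subtractf e1 e2 ..
    qed
    finally show ?thesis .
  qed
  have S: "(\<Sum>mu\<in>UNIV. F a mu * ((\<Sum>nu\<in>UNIV. x nu * P b mu nu) + E b mu)) = X a b + (if b = a then 1 else 0)" for a b
    unfolding X_def using EF[of b a] by (simp add: ring_distribs sum.distrib mult_ac)
  show ?thesis
    unfolding D_def[symmetric] OmF_def S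
    using T1 T2[of a b] T2[of b a]
    by (simp add: sum_distrib_left ring_distribs sum.distrib sum_subtractf sum_negf)
qed



lemma smooth_Ck: "smooth f \<Longrightarrow> Ck k f" by (simp add: smooth_def)
lemma smooth_const: "smooth (\<lambda>x. c)" by (simp add: smooth_def Ck_const)
lemma smooth_add: "smooth f \<Longrightarrow> smooth g \<Longrightarrow> smooth (\<lambda>x. f x + g x)" by (simp add: smooth_def Ck_add)
lemma smooth_minus: "smooth f \<Longrightarrow> smooth g \<Longrightarrow> smooth (\<lambda>x. f x - g x)" by (simp add: smooth_def Ck_minus)
lemma smooth_neg: "smooth f \<Longrightarrow> smooth (\<lambda>x. - f x)" by (simp add: smooth_def Ck_neg)
lemma smooth_mult: "smooth f \<Longrightarrow> smooth g \<Longrightarrow> smooth (\<lambda>x. f x * g x)" by (simp add: smooth_def Ck_mult)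
lemma smooth_inverse: "smooth f \<Longrightarrow> (\<forall>x. f x \<noteq> 0) \<Longrightarrow> smooth (\<lambda>x. inverse (f x))" by (simp add: smooth_def Ck_inverse)
lemma smooth_sum: "finite S \<Longrightarrow> (\<And>s. s \<in> S \<Longrightarrow> smooth (f s)) \<Longrightarrow> smooth (\<lambda>x. \<Sum>s\<in>S. f s x)"
  by (simp add: smooth_def Ck_sum)
lemma smooth_prod: "finite S \<Longrightarrow> (\<And>s. s \<in> S \<Longrightarrow> smooth (f s)) \<Longrightarrow> smooth (\<lambda>x. \<Prod>s\<in>S. f s x)"
  by (simp add: smooth_def Ck_prod)
lemma smooth_pd: "smooth f \<Longrightarrow> smooth (pd i f)"
  unfolding smooth_def by (metis Ck.simps(2))
lemma smooth_diff: "smooth f \<Longrightarrow> f differentiable_on UNIV"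
  unfolding smooth_def by (metis Ck.simps(2))
lemma smooth_cont: "smooth f \<Longrightarrow> continuous_on UNIV f"
  unfolding smooth_def by (metis Ck.simps(1))

lemma smooth_det:
  fixes M :: "real^'n::finite \<Rightarrow> real^'m::finite^'m"
  assumes "\<And>i j. smooth (\<lambda>x. M x $ i $ j)"
  shows "smooth (\<lambda>x. det (M x))"
  unfolding det_def
  by (intro smooth_sum smooth_mult smooth_const smooth_prod assms) (auto simp: finite_permutations)

lemma vmat_nth[simp]: "vmat e x $ i $ j = e i j x" by (simp add: vmat_def)

lemma matrix_inv_props:
  assumes "invertible (A::real^'n::finite^'n)"
  shows "A ** matrix_inv A = mat 1" "matrix_inv A ** A = mat 1"
  using someI_ex[OF assms[unfolded invertible_def]] unfolding matrix_inv_def by auto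


lemma inv_frame_cramer:
  fixes e :: "'n::finite frame"
  assumes inv: "invertible (vmat e x)"
  shows "inv_frame e a mu x = det ((\<chi> i j. if j = mu then axis a 1 $ i else e i j x)::real^'n^'n) * inverse (det (vmat e x))"
proof -
  let ?A = "vmat e x" and ?B = "matrix_inv (vmat e x)"
  have d: "det ?A \<noteq> 0" using inv invertible_det_nz by blast
  have "?A *v (?B *v axis a 1) = axis a 1"
    by (simp add: matrix_vector_mul_assoc matrix_inv_props(1)[OF inv])
  then have "?B *v axis a 1 = (\<chi> k. det(\<chi> i j. if j=k then axis a 1 $i else ?A$i$j) / det ?A)"
    using cramer[OF d] by blast
  then have "(?B *v axis a 1) $ mu = det(\<chi> i j. if j=mu then axis a 1 $i else ?A$i$j) / det ?A"
    by simp
  moreover have "(?B *v axis a 1) $ mu = ?B $ mu $ a"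
    by (simp add: matrix_vector_mult_def axis_def if_distrib cong: if_cong)
  moreover have dd: "((\<chi> i j. if j = mu then axis a 1 $ i else vmat e x $ i $ j)::real^'n^'n) = (\<chi> i j. if j = mu then axis a 1 $ i else e i j x)"
    by (simp only: vmat_nth)
  ultimately show ?thesis
    unfolding inv_frame_def dd by (simp add: divide_inverse)
qed

lemma smooth_inv_frame:
  fixes e :: "'n::finite frame"
  assumes "is_vielbein e"
  shows "smooth (\<lambda>x. inv_frame e a mu x)"
proof -
  have sm: "smooth (e a mu)" for a mu using assms unfolding is_vielbein_def by blast
  have inv: "invertible (vmat e x)" for x using assms unfolding is_vielbein_def by blast
  have eq: "(\<lambda>x. inv_frame e a mu x) = (\<lambda>x. det ((\<chi> i j. if j = mu then axis a 1 $ i else e i j x)::real^'n^'n) * inverse (det (vmat e x)))"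
    using inv_frame_cramer[OF inv] by blast
  show ?thesis unfolding eq
  proof (intro smooth_mult smooth_inverse smooth_det)
    show "smooth (\<lambda>x. (\<chi> i j. if j = mu then axis a 1 $ i else e i j x) $ i $ j)" for i j
      by (cases "j = mu") (simp_all add: smooth_const sm)
    show "smooth (\<lambda>x. vmat e x $ i $ j)" for i j by (simp add: vmat_def sm)
    show "\<forall>x. det (vmat e x) \<noteq> 0" using inv invertible_det_nz by blast
  qed
qed



lemma omega_of_OmF: "omega_of e a b mu x = OmF (\<lambda>a mu. e a mu x) (\<lambda>a mu. inv_frame e a mu x) (\<lambda>c r n. dform e c r n x) a b mu"
  by (simp add: omega_of_def OmF_def)

lemma EF_v:
  fixes e :: "'n::finite frame"
  assumes "is_vielbein e"
  shows "(\<Sum>mu\<in>UNIV. e a mu x * inv_frame e b mu x) = (if a = b then 1 else 0)"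
proof -
  have inv: "invertible (vmat e x)" using assms unfolding is_vielbein_def by blast
  have "(vmat e x ** matrix_inv (vmat e x)) $ a $ b = mat 1 $ a $ b"
    using matrix_inv_props(1)[OF inv] by simp
  then show ?thesis by (simp add: matrix_matrix_mult_def mat_def inv_frame_def)
qed

lemma FE_v:
  fixes e :: "'n::finite frame"
  assumes "is_vielbein e"
  shows "(\<Sum>a\<in>UNIV. inv_frame e a mu x * e a nu x) = (if mu = nu then 1 else 0)"
proof -
  have inv: "invertible (vmat e x)" using assms unfolding is_vielbein_def by blast
  have "(matrix_inv (vmat e x) ** vmat e x) $ mu $ nu = mat 1 $ mu $ nu"
    using matrix_inv_props(2)[OF inv] by simp
  then show ?thesis by (simp add: matrix_matrix_mult_def mat_def inv_frame_def)
qed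

lemma dform_anti: "dform e c r n x = - dform e c n r x" by (simp add: dform_def)

lemma deriv_identity:
  fixes g :: "'n::finite \<Rightarrow> real^'n \<Rightarrow> real"
  assumes sm: "\<And>k. smooth (g k)" and idt: "\<And>y. (\<Sum>k\<in>UNIV. y$k * g k y) = y$j"
  shows "(\<Sum>k\<in>UNIV. x$k * pd i (g k) x) + g i x = (if j = i then 1 else 0)"
proof -
  have d1: "((\<lambda>y. \<Sum>k\<in>UNIV. y$k * g k y) has_derivative
     (\<lambda>h. \<Sum>k\<in>UNIV. x$k * frechet_derivative (g k) (at x) h + h$k * g k x)) (at x)"
  proof (intro has_derivative_sum has_derivative_mult)
    fix k
    show "((\<lambda>y. y$k) has_derivative (\<lambda>h. h$k)) (at x)"
      by (rule bounded_linear_imp_has_derivative) (rule bounded_linear_vec_nth)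
    show "(g k has_derivative frechet_derivative (g k) (at x)) (at x)"
      by (rule fdw, rule smooth_diff, rule sm)
  qed
  have d2: "((\<lambda>y. y$j) has_derivative (\<lambda>h. h$j)) (at x)"
    by (rule bounded_linear_imp_has_derivative) (rule bounded_linear_vec_nth)
  have eqf: "(\<lambda>y. \<Sum>k\<in>UNIV. y$k * g k y) = (\<lambda>y. y$j)" using idt by auto
  have "(\<lambda>h. \<Sum>k\<in>UNIV. x$k * frechet_derivative (g k) (at x) h + h$k * g k x) = (\<lambda>h. h$j)"
    using has_derivative_unique[OF d1] d2 unfolding eqf by blast
  then have "(\<Sum>k\<in>UNIV. x$k * frechet_derivative (g k) (at x) (axis i 1) + (axis i 1)$k * g k x) = (axis i 1)$j"
    by (rule fun_cong)
  moreover have "(\<Sum>k\<in>UNIV. (axis i 1)$k * g k x) = g i x"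
  proof -
    have ax: "(axis i 1)$k * g k x = (if k = i then g i x else 0)" for k by (simp add: axis_def)
    show ?thesis unfolding ax by simp
  qed
  ultimately show ?thesis
    by (simp add: sum.distrib pd_def axis_def)
qed

lemma lie_alg:
  fixes E w :: "'n::finite \<Rightarrow> 'n \<Rightarrow> real"
  assumes tor: "\<And>nu. D nu + (\<Sum>b\<in>UNIV. w b nu * E b mu - w b mu * E b nu) = 0"
  and FS: "\<And>b. (\<Sum>nu\<in>UNIV. y nu * w b nu) = 0"
  and P1: "\<And>b. (\<Sum>nu\<in>UNIV. y nu * E b nu) = y b"
  shows "(\<Sum>nu\<in>UNIV. y nu * D nu) = (\<Sum>b\<in>UNIV. w b mu * y b)"
proof -
  have "(\<Sum>nu\<in>UNIV. y nu * D nu) = (\<Sum>nu\<in>UNIV. \<Sum>b\<in>UNIV. y nu * w b mu * E b nu - y nu * w b nu * E b mu)"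
  proof (rule sum.cong[OF refl])
    fix nu
    have "D nu = - (\<Sum>b\<in>UNIV. w b nu * E b mu - w b mu * E b nu)" using tor[of nu] by linarith
    then show "y nu * D nu = (\<Sum>b\<in>UNIV. y nu * w b mu * E b nu - y nu * w b nu * E b mu)"
      by (simp add: sum_distrib_left sum_subtractf sum_negf right_diff_distrib mult_ac)
  qed
  also have "\<dots> = (\<Sum>b\<in>UNIV. \<Sum>nu\<in>UNIV. y nu * w b mu * E b nu - y nu * w b nu * E b mu)"
    by (rule sum.swap)
  also have "\<dots> = (\<Sum>b\<in>UNIV. w b mu * (\<Sum>nu\<in>UNIV. y nu * E b nu) - (\<Sum>nu\<in>UNIV. y nu * w b nu) * E b mu)"
    by (simp add: sum_subtractf sum_distrib_left sum_distrib_right mult_ac)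
  also have "\<dots> = (\<Sum>b\<in>UNIV. w b mu * y b)" by (simp add: FS P1)
  finally show ?thesis .
qed



lemma OmF_anti:
  fixes E F :: "'n::finite \<Rightarrow> 'n \<Rightarrow> real"
  assumes FE: "\<And>mu nu. (\<Sum>a\<in>UNIV. F a mu * E a nu) = (if mu = nu then 1 else 0)"
  and Dan: "\<And>c r n. D c r n = - D c n r"
  shows "OmF E F D a b mu = - OmF E F D b a mu"
proof -
  have "WF F D a b k = - WF F D b a k" for k
    using CF_anti[of D F k a b, OF Dan] unfolding WF_def by (simp add: field_simps)
  then show ?thesis unfolding Om_eq[OF FE] by (simp add: sum_negf)
qed

lemma Dfx_expand:
  assumes "(f has_derivative D) (at y)"
  shows "D x = (\<Sum>nu\<in>UNIV. x$nu * pd nu f y)"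
proof -
  have lin: "linear D" using has_derivative_linear[OF assms] .
  have "D x = D (\<Sum>nu\<in>UNIV. x$nu *\<^sub>R axis nu 1)"
    using basis_expansion[of x] by (simp add: scalar_mult_eq_scaleR)
  also have "\<dots> = (\<Sum>nu\<in>UNIV. x$nu * D (axis nu 1))"
    by (simp add: real_vector.linear_sum[OF lin] linear_cmul[OF lin])
  also have "\<dots> = (\<Sum>nu\<in>UNIV. x$nu * pd nu f y)"
    using pd_eq[OF assms] by simp
  finally show ?thesis .
qed

lemma ftc_e:
  fixes f :: "real^'n::finite \<Rightarrow> real"
  assumes sm: "smooth f"
  and L: "\<And>t. (\<Sum>nu\<in>UNIV. (t *\<^sub>R x)$nu * pd nu f (t *\<^sub>R x)) + f (t *\<^sub>R x) = c + g t"
  shows "integral {0..1} g = f x - c"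
proof -
  define h where "h t = t * f (t *\<^sub>R x)" for t :: real
  have hd: "(h has_vector_derivative (c + g t)) (at t within {0..1})" for t
  proof -
    let ?D = "frechet_derivative f (at (t *\<^sub>R x))"
    have fd: "(f has_derivative ?D) (at (t *\<^sub>R x))" by (rule fdw, rule smooth_diff[OF sm])
    have sd: "((\<lambda>s::real. s *\<^sub>R x) has_derivative (\<lambda>s. s *\<^sub>R x)) (at t within {0..1})"
      by (rule bounded_linear_imp_has_derivative) (rule bounded_linear_scaleR_left)
    have cd: "((\<lambda>s. f (s *\<^sub>R x)) has_derivative (\<lambda>s. ?D (s *\<^sub>R x))) (at t within {0..1})"
      using has_derivative_compose[OF sd fd] .
    have hd0: "(h has_derivative (\<lambda>s. t * ?D (s *\<^sub>R x) + s * f (t *\<^sub>R x))) (at t within {0..1})"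
      unfolding h_def using has_derivative_mult[OF has_derivative_ident cd] .
    have lin: "linear ?D" using has_derivative_linear[OF fd] .
    have "(\<lambda>s. t * ?D (s *\<^sub>R x) + s * f (t *\<^sub>R x)) = (\<lambda>s. s *\<^sub>R (t * ?D x + f (t *\<^sub>R x)))"
      by (rule ext) (simp add: linear_cmul[OF lin] algebra_simps)
    moreover have "t * ?D x + f (t *\<^sub>R x) = c + g t"
      using L[of t] Dfx_expand[OF fd, of x] by (simp add: sum_distrib_left mult_ac)
    ultimately show ?thesis
      using hd0 unfolding has_vector_derivative_def by simp
  qed
  have "((\<lambda>t. c + g t) has_integral (h 1 - h 0)) {0..1}"
    by (rule fundamental_theorem_of_calculus) (use hd in auto)
  then have i1: "((\<lambda>t. c + g t) has_integral f x) {0..1}" by (simp add: h_def)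
  have i2: "((\<lambda>t. c) has_integral c) {0..1::real}"
    using has_integral_const_real[of c 0 1] by simp
  have "((\<lambda>t. (c + g t) - c) has_integral (f x - c)) {0..1}"
    by (rule has_integral_diff[OF i1 i2])
  then show ?thesis by (simp add: integral_unique)
qed

lemma cont_comp: "smooth f \<Longrightarrow> continuous_on S (\<lambda>t::real. f (t *\<^sub>R x))"
  by (rule continuous_on_compose2[OF smooth_cont[of f]]) (auto intro: continuous_intros)

lemma int_sum_cmult:
  fixes f :: "'n::finite \<Rightarrow> real \<Rightarrow> real"
  assumes "\<And>k. continuous_on {0..1} (f k)"
  shows "(\<Sum>k\<in>UNIV. c k * integral {0..1} (f k)) = integral {0..1} (\<lambda>t. \<Sum>k\<in>UNIV. c k * f k t)"
proof -
  have "(\<lambda>t. c k * f k t) integrable_on {0..1}" for k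
    by (rule integrable_on_mult_right, rule integrable_continuous_interval, rule assms)
  then show ?thesis by (simp add: integral_sum)
qed

lemma anti_sum:
  fixes w :: "'n::finite \<Rightarrow> 'n \<Rightarrow> real"
  assumes "\<And>a b. w a b = - w b a"
  shows "(\<Sum>a\<in>UNIV. \<Sum>b\<in>UNIV. z a * z b * w a b) = 0"
proof -
  have "(\<Sum>a\<in>UNIV. \<Sum>b\<in>UNIV. z a * z b * w a b) = (\<Sum>b\<in>UNIV. \<Sum>a\<in>UNIV. z a * z b * w a b)"
    by (rule sum.swap)
  also have "\<dots> = - (\<Sum>a\<in>UNIV. \<Sum>b\<in>UNIV. z a * z b * w a b)"
    by (subst assms) (simp add: sum_negf mult_ac)
  finally show ?thesis by simp
qed



lemma radial_v:
  fixes e :: "'n::finite frame"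
  assumes vb: "is_vielbein e" and P1: "\<And>a x. (\<Sum>mu\<in>UNIV. x$mu * e a mu x) = x$a"
    and P2: "\<And>mu x. (\<Sum>a\<in>UNIV. x$a * e a mu x) = x$mu"
  shows "2 * (\<Sum>mu\<in>UNIV. x$mu * omega_of e a b mu x) = iL e a b x - iL e b a x"
proof -
  have sm: "\<And>a mu. smooth (e a mu)" using vb unfolding is_vielbein_def by blast
  have R1: "(\<Sum>k\<in>UNIV. x$k * pd i (e a k) x) + e a i x = (if a = i then 1 else 0)" for a i
    using deriv_identity[of "\<lambda>k. e a k" a x i] sm P1 by simp
  have R2: "(\<Sum>k\<in>UNIV. x$k * pd i (e k mu) x) + e i mu x = (if mu = i then 1 else 0)" for mu i
    using deriv_identity[of "\<lambda>k. e k mu" mu x i] sm P2 by simp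
  have Deq: "(\<lambda>c r n. pd r (e c n) x - pd n (e c r) x) = (\<lambda>c r n. dform e c r n x)"
    by (simp add: dform_def)
  have "2 * (\<Sum>mu\<in>UNIV. x$mu * OmF (\<lambda>a mu. e a mu x) (\<lambda>a mu. inv_frame e a mu x)
          (\<lambda>c r n. pd r (e c n) x - pd n (e c r) x) a b mu)
     = (\<Sum>mu\<in>UNIV. inv_frame e a mu x * ((\<Sum>nu\<in>UNIV. x$nu * pd nu (e b mu) x) + e b mu x))
     - (\<Sum>mu\<in>UNIV. inv_frame e b mu x * ((\<Sum>nu\<in>UNIV. x$nu * pd nu (e a mu) x) + e a mu x))"
  proof (rule radial_identity[where P = "\<lambda>a mu nu. pd nu (e a mu) x" and x = "\<lambda>mu. x$mu"])
    show "\<And>a b. (\<Sum>mu\<in>UNIV. e a mu x * inv_frame e b mu x) = (if a = b then 1 else 0)"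
      by (rule EF_v[OF vb])
    show "\<And>c. (\<Sum>mu\<in>UNIV. x$mu * e c mu x) = x$c" by (rule P1)
    show "\<And>a nu. (\<Sum>mu\<in>UNIV. x$mu * pd nu (e a mu) x) = (if a = nu then 1 else 0) - e a nu x"
      using R1 by (simp add: eq_diff_eq)
    show "\<And>rho nu. (\<Sum>c\<in>UNIV. x$c * pd rho (e c nu) x) = (if rho = nu then 1 else 0) - e rho nu x"
      using R2 by (auto simp: eq_diff_eq)
  qed
  then show ?thesis unfolding Deq omega_of_OmF[symmetric] iL_def lie_r_def .
qed

lemma smooth_dform: "(\<And>c nu. smooth (e c nu)) \<Longrightarrow> smooth (\<lambda>x. dform e c rho nu x)"
  unfolding dform_def by (intro smooth_minus smooth_pd) auto

lemma dir1:
  fixes \<omega> :: "'n::finite conn"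
  assumes "space_i \<omega>"
  shows "space_ii (e_of \<omega>) \<and> omega_of (e_of \<omega>) = \<omega>"
proof -
  define e where "e = e_of \<omega>"
  have smw: "\<And>a b mu. smooth (\<omega> a b mu)" and anti: "\<And>a b mu x. \<omega> a b mu x = - \<omega> b a mu x"
    and FS: "\<And>a b x. (\<Sum>mu\<in>UNIV. x$mu * \<omega> a b mu x) = 0" and vb: "is_vielbein e"
    and tor: "\<And>a mu nu x. dform e a mu nu x + (\<Sum>b\<in>UNIV. \<omega> a b mu x * e b nu x - \<omega> a b nu x * e b mu x) = 0"
    using assms unfolding space_i_def spin_connection_def FS_gauge_def torsionless_def e_def by blast+
  have uniq: "\<omega> a b mu x = omega_of e a b mu x" for a b mu x
    unfolding omega_of_OmF
    by (rule Om_unique[where w = "\<lambda>a b mu. \<omega> a b mu x"]) (rule FE_v[OF vb], rule EF_v[OF vb], rule anti, rule tor)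
  have cont: "continuous_on {0..1} (\<lambda>t. \<Sum>b\<in>UNIV. \<omega> a b mu (t *\<^sub>R x) * t * x$b)" for a mu x
    by (intro continuous_intros cont_comp smw)
  have P1: "(\<Sum>mu\<in>UNIV. x$mu * e a mu x) = x$a" for a x
  proof -
    have ax: "x$mu * (if a = mu then 1 else 0) = (if mu = a then x$a else 0)" for mu by auto
    have "(\<Sum>mu\<in>UNIV. x$mu * e a mu x) = (\<Sum>mu\<in>UNIV. x$mu * (if a = mu then 1 else 0))
       + (\<Sum>mu\<in>UNIV. x$mu * integral {0..1} (\<lambda>t. \<Sum>b\<in>UNIV. \<omega> a b mu (t *\<^sub>R x) * t * x$b))"
      unfolding e_def e_of_def by (simp add: ring_distribs sum.distrib)
    also have "(\<Sum>mu\<in>UNIV. x$mu * (if a = mu then 1 else 0)) = x$a" unfolding ax by simp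
    also have "(\<Sum>mu\<in>UNIV. x$mu * integral {0..1} (\<lambda>t. \<Sum>b\<in>UNIV. \<omega> a b mu (t *\<^sub>R x) * t * x$b))
       = integral {0..1} (\<lambda>t. \<Sum>mu\<in>UNIV. x$mu * (\<Sum>b\<in>UNIV. \<omega> a b mu (t *\<^sub>R x) * t * x$b))"
      by (rule int_sum_cmult) (rule cont)
    also have "(\<lambda>t. \<Sum>mu\<in>UNIV. x$mu * (\<Sum>b\<in>UNIV. \<omega> a b mu (t *\<^sub>R x) * t * x$b)) = (\<lambda>t. 0)"
    proof (rule ext)
      fix t
      have "(\<Sum>mu\<in>UNIV. x$mu * (\<Sum>b\<in>UNIV. \<omega> a b mu (t *\<^sub>R x) * t * x$b))
          = (\<Sum>mu\<in>UNIV. \<Sum>b\<in>UNIV. x$mu * (\<omega> a b mu (t *\<^sub>R x) * t * x$b))"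
        by (simp add: sum_distrib_left)
      also have "\<dots> = (\<Sum>b\<in>UNIV. \<Sum>mu\<in>UNIV. x$mu * (\<omega> a b mu (t *\<^sub>R x) * t * x$b))"
        by (rule sum.swap)
      also have "\<dots> = (\<Sum>b\<in>UNIV. x$b * (\<Sum>mu\<in>UNIV. (t *\<^sub>R x)$mu * \<omega> a b mu (t *\<^sub>R x)))"
        by (simp add: sum_distrib_left mult_ac)
      also have "\<dots> = 0" by (simp only: FS) simp
      finally show "(\<Sum>mu\<in>UNIV. x$mu * (\<Sum>b\<in>UNIV. \<omega> a b mu (t *\<^sub>R x) * t * x$b)) = 0" .
    qed
    finally show ?thesis by simp
  qed
  have P2: "(\<Sum>a\<in>UNIV. x$a * e a mu x) = x$mu" for mu x
  proof -
    have ax: "x$a * (if a = mu then 1 else 0) = (if a = mu then x$mu else 0)" for a by auto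
    have "(\<Sum>a\<in>UNIV. x$a * e a mu x) = (\<Sum>a\<in>UNIV. x$a * (if a = mu then 1 else 0))
       + (\<Sum>a\<in>UNIV. x$a * integral {0..1} (\<lambda>t. \<Sum>b\<in>UNIV. \<omega> a b mu (t *\<^sub>R x) * t * x$b))"
      unfolding e_def e_of_def by (simp add: ring_distribs sum.distrib)
    also have "(\<Sum>a\<in>UNIV. x$a * (if a = mu then 1 else 0)) = x$mu" unfolding ax by simp
    also have "(\<Sum>a\<in>UNIV. x$a * integral {0..1} (\<lambda>t. \<Sum>b\<in>UNIV. \<omega> a b mu (t *\<^sub>R x) * t * x$b))
       = integral {0..1} (\<lambda>t. \<Sum>a\<in>UNIV. x$a * (\<Sum>b\<in>UNIV. \<omega> a b mu (t *\<^sub>R x) * t * x$b))"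
      by (rule int_sum_cmult) (rule cont)
    also have "(\<lambda>t. \<Sum>a\<in>UNIV. x$a * (\<Sum>b\<in>UNIV. \<omega> a b mu (t *\<^sub>R x) * t * x$b)) = (\<lambda>t. 0)"
    proof (rule ext)
      fix t
      have "(\<Sum>a\<in>UNIV. x$a * (\<Sum>b\<in>UNIV. \<omega> a b mu (t *\<^sub>R x) * t * x$b))
          = t * (\<Sum>a\<in>UNIV. \<Sum>b\<in>UNIV. x$a * x$b * \<omega> a b mu (t *\<^sub>R x))"
        by (simp add: sum_distrib_left mult_ac)
      also have "\<dots> = 0"
        using anti_sum[of "\<lambda>a b. \<omega> a b mu (t *\<^sub>R x)" "\<lambda>a. x$a", OF anti] by simp
      finally show "(\<Sum>a\<in>UNIV. x$a * (\<Sum>b\<in>UNIV. \<omega> a b mu (t *\<^sub>R x) * t * x$b)) = 0" .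
    qed
    finally show ?thesis by simp
  qed
  have Ssym: "iL e a b x = iL e b a x" for a b x
  proof -
    have "iL e a b x - iL e b a x = 2 * (\<Sum>mu\<in>UNIV. x$mu * omega_of e a b mu x)"
      using radial_v[OF vb P1 P2] by simp
    also have "\<dots> = 2 * (\<Sum>mu\<in>UNIV. x$mu * \<omega> a b mu x)" by (simp add: uniq)
    also have "\<dots> = 0" by (simp add: FS)
    finally show ?thesis by simp
  qed
  have "space_ii e" unfolding space_ii_def using vb P1 P2 Ssym by blast
  moreover have "omega_of e = \<omega>" by (intro ext) (simp add: uniq)
  ultimately show ?thesis unfolding e_def by blast
qed

lemma dir2:
  fixes e :: "'n::finite frame"
  assumes "space_ii e"
  shows "space_i (omega_of e) \<and> e_of (omega_of e) = e"
proof -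
  have vb: "is_vielbein e" and P1: "\<And>a x. (\<Sum>mu\<in>UNIV. x$mu * e a mu x) = x$a"
    and P2: "\<And>mu x. (\<Sum>a\<in>UNIV. x$a * e a mu x) = x$mu"
    and Ssym: "\<And>a b x. iL e a b x = iL e b a x"
    using assms unfolding space_ii_def by blast+
  define \<omega> where "\<omega> = omega_of e"
  have sm: "\<And>a mu. smooth (e a mu)" using vb unfolding is_vielbein_def by blast
  have smw: "smooth (\<omega> a b mu)" for a b mu
    unfolding \<omega>_def omega_of_def[abs_def]
    by (intro smooth_mult smooth_const smooth_minus smooth_add smooth_neg smooth_sum finite_UNIV
        smooth_inv_frame[OF vb] smooth_dform sm) simp_all
  have anti: "\<omega> a b mu x = - \<omega> b a mu x" for a b mu x
    unfolding \<omega>_def omega_of_OmF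
    by (rule OmF_anti[OF FE_v[OF vb]]) (rule dform_anti)
  have FS: "(\<Sum>mu\<in>UNIV. x$mu * \<omega> a b mu x) = 0" for a b x
    using radial_v[OF vb P1 P2, of x a b] Ssym[of a b x] unfolding \<omega>_def by simp
  have tor: "dform e a mu nu x + (\<Sum>b\<in>UNIV. \<omega> a b mu x * e b nu x - \<omega> a b nu x * e b mu x) = 0" for a mu nu x
    unfolding \<omega>_def omega_of_OmF
    by (rule Om_torsion[OF FE_v[OF vb]]) (rule dform_anti)
  have lie: "(\<Sum>nu\<in>UNIV. y$nu * pd nu (e a mu) y) + e a mu y = (if a = mu then 1 else 0) + (\<Sum>b\<in>UNIV. \<omega> a b mu y * y$b)" for a mu y
  proof -
    have R1: "(\<Sum>k\<in>UNIV. y$k * pd mu (e a k) y) + e a mu y = (if a = mu then 1 else 0)"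
      using deriv_identity[of "\<lambda>k. e a k" a y mu] sm P1 by simp
    have LA: "(\<Sum>nu\<in>UNIV. y$nu * dform e a nu mu y) = (\<Sum>b\<in>UNIV. \<omega> a b mu y * y$b)"
      by (rule lie_alg[where E = "\<lambda>b nu. e b nu y" and w = "\<lambda>b nu. \<omega> a b nu y"])
         (rule tor, rule FS, rule P1)
    have "(\<Sum>nu\<in>UNIV. y$nu * dform e a nu mu y) = (\<Sum>nu\<in>UNIV. y$nu * pd nu (e a mu) y) - (\<Sum>k\<in>UNIV. y$k * pd mu (e a k) y)"
      by (simp add: dform_def right_diff_distrib sum_subtractf)
    then show ?thesis using R1 LA by linarith
  qed
  have eof: "e_of \<omega> a mu x = e a mu x" for a mu x
  proof -
    have "integral {0..1} (\<lambda>t. \<Sum>b\<in>UNIV. \<omega> a b mu (t *\<^sub>R x) * t * x$b) = e a mu x - (if a = mu then 1 else 0)"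
    proof (rule ftc_e[OF sm])
      fix t
      show "(\<Sum>nu\<in>UNIV. (t *\<^sub>R x)$nu * pd nu (e a mu) (t *\<^sub>R x)) + e a mu (t *\<^sub>R x)
          = (if a = mu then 1 else 0) + (\<Sum>b\<in>UNIV. \<omega> a b mu (t *\<^sub>R x) * t * x$b)"
        using lie[of "t *\<^sub>R x" a mu] by (simp add: mult_ac)
    qed
    then show ?thesis unfolding e_of_def by simp
  qed
  have eq: "e_of \<omega> = e" by (intro ext) (rule eof)
  have "space_i \<omega>"
    unfolding space_i_def spin_connection_def FS_gauge_def torsionless_def eq
    using smw anti FS vb tor by blast
  then show ?thesis using eq unfolding \<omega>_def by blast
qed

theorem theorem2:
  shows "(\<forall>\<omega> :: 'n::finite conn. space_i \<omega> \<longrightarrow>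
            space_ii (e_of \<omega>) \<and> omega_of (e_of \<omega>) = \<omega>) \<and>
         (\<forall>e :: 'n frame. space_ii e \<longrightarrow>
            space_i (omega_of e) \<and> e_of (omega_of e) = e)"
  using dir1 dir2 by blast

end
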